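(* Let an $m\times n$ net in $I^3$ have all its faces in non-isotropic planes. Then the net is deformable if and only if its top view is deformable.
   Context: $I^3$ is $\mathbb{R}^3$ with coordinates $(x,y,z)$; a plane is isotropic if parallel to the $z$-axis; the top view of a point $(x,y,z)$ is $(x,y)$, and the top view of a net is the planar net of top views of its vertices. An $m\times n$ net: points $F_{ij}$, $0\le i\le m,0\le j\le n$, with $F_{ij},F_{i+1,j},F_{i+1,j+1},F_{i,j+1}$ consecutive vertices of a convex planar quadrilateral (face) for all $0\le i<m,0\le j<n$. Two nets are parallel (Combescure transformations of each other) if corresponding edges are parallel. A net is deformable if it is contained in a continuous family of pairwise non-congruent (in the Euclidean or isotropic sense) parallel nets with the same areas of corresponding faces. Isotropic congruences are maps $\mathbf{x}\mapsto A\mathbf{x}+\mathbf{b}$, $A=\begin{pmatrix}\cos\phi&-\sin\phi&0\\ \sin\phi&\cos\phi&0\\ c_1&c_2&1\end{pmatrix}$. *)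

theory Defs
  imports "HOL-Analysis.Analysis"
begin

text \<open>Points of I^3 are vectors in real^3 with coordinates (x,y,z) = (x$1, x$2, x$3).
  The top view of (x,y,z) is (x,y) in real^2.\<close>

definition top_view :: "real^3 \<Rightarrow> real^2" where
  "top_view p = vector [p$1, p$2]"

definition cross2 :: "real^2 \<Rightarrow> real^2 \<Rightarrow> real" where
  "cross2 u v = u$1 * v$2 - u$2 * v$1"

text \<open>a,b,c,d are consecutive vertices of a (non-degenerate) convex planar quadrilateral:
  all four turns have the same orientation, i.e. the cross products of consecutive
  edge vectors are nonzero positive multiples of one common normal vector N
  (this forces planarity and strict convexity).\<close>

definition convex_quad3 :: "real^3 \<Rightarrow> real^3 \<Rightarrow> real^3 \<Rightarrow> real^3 \<Rightarrow> bool" where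
  "convex_quad3 a b c d \<longleftrightarrow> (\<exists>N. N \<noteq> 0 \<and>
      (\<exists>k>0. cross3 (b - a) (c - b) = k *\<^sub>R N) \<and>
      (\<exists>k>0. cross3 (c - b) (d - c) = k *\<^sub>R N) \<and>
      (\<exists>k>0. cross3 (d - c) (a - d) = k *\<^sub>R N) \<and>
      (\<exists>k>0. cross3 (a - d) (b - a) = k *\<^sub>R N))"

definition convex_quad2 :: "real^2 \<Rightarrow> real^2 \<Rightarrow> real^2 \<Rightarrow> real^2 \<Rightarrow> bool" where
  "convex_quad2 a b c d \<longleftrightarrow>
     (\<exists>s::real. (s = 1 \<or> s = -1) \<and>
        s * cross2 (b - a) (c - b) > 0 \<and> s * cross2 (c - b) (d - c) > 0 \<and>
        s * cross2 (d - c) (a - d) > 0 \<and> s * cross2 (a - d) (b - a) > 0)"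

text \<open>Euclidean area of a convex planar quadrilateral (shoelace / diagonal formula).\<close>

definition quad_area2 :: "real^2 \<Rightarrow> real^2 \<Rightarrow> real^2 \<Rightarrow> real^2 \<Rightarrow> real" where
  "quad_area2 a b c d = \<bar>cross2 (c - a) (d - b)\<bar> / 2"

definition iso_quad_area :: "real^3 \<Rightarrow> real^3 \<Rightarrow> real^3 \<Rightarrow> real^3 \<Rightarrow> real" where
  "iso_quad_area a b c d = quad_area2 (top_view a) (top_view b) (top_view c) (top_view d)"

text \<open>A plane u.x = c is isotropic iff it is parallel to the z-axis, i.e. u$3 = 0.
  A quadrilateral lies in a non-isotropic plane iff no isotropic plane contains it.\<close>

definition in_nonisotropic_plane :: "real^3 \<Rightarrow> real^3 \<Rightarrow> real^3 \<Rightarrow> real^3 \<Rightarrow> bool" where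
  "in_nonisotropic_plane a b c d \<longleftrightarrow>
     \<not> (\<exists>u c0. u \<noteq> 0 \<and> u$3 = 0 \<and> u \<bullet> a = c0 \<and> u \<bullet> b = c0 \<and> u \<bullet> c = c0 \<and> u \<bullet> d = c0)"

text \<open>An m x n net is given by F i j for 0 \<le> i \<le> m, 0 \<le> j \<le> n (values outside are irrelevant).\<close>

definition is_net3 :: "nat \<Rightarrow> nat \<Rightarrow> (nat \<Rightarrow> nat \<Rightarrow> real^3) \<Rightarrow> bool" where
  "is_net3 m n F \<longleftrightarrow> (\<forall>i<m. \<forall>j<n.
      convex_quad3 (F i j) (F (Suc i) j) (F (Suc i) (Suc j)) (F i (Suc j)))"

definition is_net2 :: "nat \<Rightarrow> nat \<Rightarrow> (nat \<Rightarrow> nat \<Rightarrow> real^2) \<Rightarrow> bool" where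
  "is_net2 m n F \<longleftrightarrow> (\<forall>i<m. \<forall>j<n.
      convex_quad2 (F i j) (F (Suc i) j) (F (Suc i) (Suc j)) (F i (Suc j)))"

definition top_view_net :: "(nat \<Rightarrow> nat \<Rightarrow> real^3) \<Rightarrow> (nat \<Rightarrow> nat \<Rightarrow> real^2)" where
  "top_view_net F = (\<lambda>i j. top_view (F i j))"

definition nets_parallel :: "nat \<Rightarrow> nat \<Rightarrow> (nat \<Rightarrow> nat \<Rightarrow> 'a::real_vector) \<Rightarrow> (nat \<Rightarrow> nat \<Rightarrow> 'a) \<Rightarrow> bool" where
  "nets_parallel m n F G \<longleftrightarrow>
     (\<forall>i<m. \<forall>j\<le>n. \<exists>l::real. G (Suc i) j - G i j = l *\<^sub>R (F (Suc i) j - F i j)) \<and>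
     (\<forall>i\<le>m. \<forall>j<n. \<exists>l::real. G i (Suc j) - G i j = l *\<^sub>R (F i (Suc j) - F i j))"

definition iso_matrix :: "real \<Rightarrow> real \<Rightarrow> real \<Rightarrow> real^3^3" where
  "iso_matrix \<phi> c1 c2 = vector [vector [cos \<phi>, - sin \<phi>, 0],
                                 vector [sin \<phi>, cos \<phi>, 0],
                                 vector [c1, c2, 1]]"

definition iso_congruent :: "nat \<Rightarrow> nat \<Rightarrow> (nat \<Rightarrow> nat \<Rightarrow> real^3) \<Rightarrow> (nat \<Rightarrow> nat \<Rightarrow> real^3) \<Rightarrow> bool" where
  "iso_congruent m n F G \<longleftrightarrow> (\<exists>\<phi> c1 c2 (b::real^3).
     \<forall>i\<le>m. \<forall>j\<le>n. G i j = iso_matrix \<phi> c1 c2 *v F i j + b)"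

definition eucl_congruent :: "nat \<Rightarrow> nat \<Rightarrow> (nat \<Rightarrow> nat \<Rightarrow> real^2) \<Rightarrow> (nat \<Rightarrow> nat \<Rightarrow> real^2) \<Rightarrow> bool" where
  "eucl_congruent m n F G \<longleftrightarrow> (\<exists>(A::real^2^2) (b::real^2). orthogonal_matrix A \<and>
     (\<forall>i\<le>m. \<forall>j\<le>n. G i j = A *v F i j + b))"

definition deformable_gen ::
  "(nat \<Rightarrow> nat \<Rightarrow> (nat \<Rightarrow> nat \<Rightarrow> 'a::real_normed_vector) \<Rightarrow> bool) \<Rightarrow>
   ('a \<Rightarrow> 'a \<Rightarrow> 'a \<Rightarrow> 'a \<Rightarrow> real) \<Rightarrow>
   (nat \<Rightarrow> nat \<Rightarrow> (nat \<Rightarrow> nat \<Rightarrow> 'a) \<Rightarrow> (nat \<Rightarrow> nat \<Rightarrow> 'a) \<Rightarrow> bool) \<Rightarrow>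
   nat \<Rightarrow> nat \<Rightarrow> (nat \<Rightarrow> nat \<Rightarrow> 'a) \<Rightarrow> bool" where
  "deformable_gen isnet area congr m n F \<longleftrightarrow>
     (\<exists>(a::real) b t0 (P :: real \<Rightarrow> nat \<Rightarrow> nat \<Rightarrow> 'a).
        a < b \<and> t0 \<in> {a..b} \<and>
        (\<forall>i\<le>m. \<forall>j\<le>n. P t0 i j = F i j) \<and>
        (\<forall>i\<le>m. \<forall>j\<le>n. continuous_on {a..b} (\<lambda>t. P t i j)) \<and>
        (\<forall>t\<in>{a..b}. isnet m n (P t) \<and> nets_parallel m n F (P t) \<and>
           (\<forall>i<m. \<forall>j<n. area (P t i j) (P t (Suc i) j) (P t (Suc i) (Suc j)) (P t i (Suc j))
                        = area (F i j) (F (Suc i) j) (F (Suc i) (Suc j)) (F i (Suc j)))) \<and>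
        (\<forall>s\<in>{a..b}. \<forall>t\<in>{a..b}. s \<noteq> t \<longrightarrow> \<not> congr m n (P s) (P t)))"

definition deformable_iso :: "nat \<Rightarrow> nat \<Rightarrow> (nat \<Rightarrow> nat \<Rightarrow> real^3) \<Rightarrow> bool" where
  "deformable_iso = deformable_gen is_net3 iso_quad_area iso_congruent"

definition deformable_planar :: "nat \<Rightarrow> nat \<Rightarrow> (nat \<Rightarrow> nat \<Rightarrow> real^2) \<Rightarrow> bool" where
  "deformable_planar = deformable_gen is_net2 quad_area2 eucl_congruent"

end

theory Submission
  imports Defs
begin

lemma top_view_comp [simp]: "top_view p $ 1 = p $ 1" "top_view p $ 2 = p $ 2"
  by (simp_all add: top_view_def)

lemma top_view_diff: "top_view (x - y) = top_view x - top_view y"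
  by (simp add: vec_eq_iff forall_2)
lemma top_view_scale: "top_view (c *\<^sub>R x) = c *\<^sub>R top_view x"
  by (simp add: vec_eq_iff forall_2)
lemma top_view_add: "top_view (x + y) = top_view x + top_view y"
  by (simp add: vec_eq_iff forall_2)
lemma top_view_uminus: "top_view (- x) = - top_view x"
  by (simp add: vec_eq_iff forall_2)

lemma top_view_eq: "top_view p = p$1 *\<^sub>R axis 1 1 + p$2 *\<^sub>R axis 2 1"
  by (simp add: vec_eq_iff forall_2 axis_def)

lemma continuous_on_top_view: "continuous_on S f \<Longrightarrow> continuous_on S (\<lambda>t. top_view (f t))"
  unfolding top_view_eq by (intro continuous_intros)

definition lift :: "real^2 \<Rightarrow> real \<Rightarrow> real^3" where
  "lift q z = vector [q$1, q$2, z]"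

lemma lift_eq: "lift q z = q$1 *\<^sub>R axis 1 1 + q$2 *\<^sub>R axis 2 1 + z *\<^sub>R axis 3 1"
  by (simp add: lift_def vec_eq_iff forall_3 axis_def)

lemma continuous_on_lift: "continuous_on S f \<Longrightarrow> continuous_on S g \<Longrightarrow> continuous_on S (\<lambda>t. lift (f t) (g t))"
  unfolding lift_eq by (intro continuous_intros)

lemma lift_comp [simp]: "lift q z $ 1 = q $ 1" "lift q z $ 2 = q $ 2" "lift q z $ 3 = z"
  by (simp_all add: lift_def)

lemma top_lift [simp]: "top_view (lift q z) = q"
  by (simp add: vec_eq_iff forall_2)

lemma cross3_3: "(cross3 u v)$3 = cross2 (top_view u) (top_view v)"
  by (simp add: cross3_def cross2_def)

lemma cross_perp:
  assumes "u \<bullet> N = 0" "v \<bullet> N = 0" "N$3 \<noteq> 0"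
  shows "cross3 u v = (cross2 (top_view u) (top_view v) / N$3) *\<^sub>R N"
proof -
  have u3: "u$3 = - (N$1*u$1 + N$2*u$2) / N$3" using assms(1,3)
    by (simp add: inner_vec_def sum_3 field_simps)
  have v3: "v$3 = - (N$1 * v$1 + N$2 * v$2) / N$3" using assms(2,3)
    by (simp add: inner_vec_def sum_3 field_simps)
  show ?thesis using assms(3)
    by (simp add: vec_eq_iff forall_3 cross3_def cross2_def u3 v3 field_simps) (simp add: algebra_simps)?
qed

lemma edge_z:
  assumes "e \<bullet> N = 0" "N$3 \<noteq> 0"
  shows "e$3 = vector [- N$1 / N$3, - N$2 / N$3] \<bullet> top_view e"
  using assms by (simp add: inner_vec_def sum_3 sum_2 field_simps) (simp add: algebra_simps)?

lemma top_nonzero: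
  assumes "e \<bullet> N = 0" "N$3 \<noteq> 0" "e \<noteq> 0"
  shows "top_view e \<noteq> 0"
proof
  assume "top_view e = 0"
  then have "e$1 = 0" "e$2 = 0" by (metis top_view_comp zero_index)+
  with assms(1,2) have "e$3 = 0" by (simp add: inner_vec_def sum_3)
  with \<open>e$1 = 0\<close> \<open>e$2 = 0\<close> assms(3) show False by (simp add: vec_eq_iff forall_3)
qed

definition rot2 :: "real \<Rightarrow> real^2^2" where
  "rot2 \<phi> = vector [vector [cos \<phi>, - sin \<phi>], vector [sin \<phi>, cos \<phi>]]"

lemma rot2_orth: "orthogonal_matrix (rot2 \<phi>)"
  by (simp add: orthogonal_matrix_def rot2_def vec_eq_iff forall_2 matrix_matrix_mult_def sum_2 transpose_def mat_def)
     (simp add: algebra_simps)?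

lemma top_iso: "top_view (iso_matrix \<phi> c1 c2 *v x + b) = rot2 \<phi> *v top_view x + top_view b"
  by (simp add: iso_matrix_def rot2_def vec_eq_iff forall_2 matrix_vector_mult_def sum_2 sum_3)

lemma iso_id: "iso_matrix 0 0 0 *v x = x"
  by (simp add: iso_matrix_def vec_eq_iff forall_3 matrix_vector_mult_def sum_3)

lemma orth_norm: "orthogonal_matrix A \<Longrightarrow> norm (A *v x) = norm (x::real^'n)"
  by (metis matrix_of_matrix_vector_mul matrix_vector_mul_linear orthogonal_transformation_matrix orthogonal_transformation_norm)

lemma face_normal:
  assumes "convex_quad3 a b c d" "in_nonisotropic_plane a b c d"
  shows "\<exists>N. N$3 \<noteq> 0 \<and> (b-a) \<bullet> N = 0 \<and> (c-b) \<bullet> N = 0 \<and> (d-c) \<bullet> N = 0 \<and> (a-d) \<bullet> N = 0"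
proof -
  obtain N k1 k2 k3 k4 where N: "N \<noteq> 0" "k1 > 0" "cross3 (b - a) (c - b) = k1 *\<^sub>R N"
    "k2 > 0" "cross3 (c - b) (d - c) = k2 *\<^sub>R N"
    "k3 > 0" "cross3 (d - c) (a - d) = k3 *\<^sub>R N"
    using assms(1) unfolding convex_quad3_def by blast
  have "(b-a) \<bullet> (k1 *\<^sub>R N) = 0" using dot_cross_self(1)[of "b-a" "c-b"] N(3) by simp
  then have e1: "(b-a) \<bullet> N = 0" using N(2) by simp
  have "(c-b) \<bullet> (k1 *\<^sub>R N) = 0" using dot_cross_self(2)[of "c-b" "b-a"] N(3) by simp
  then have e2: "(c-b) \<bullet> N = 0" using N(2) by simp
  have "(d-c) \<bullet> (k2 *\<^sub>R N) = 0" using dot_cross_self(2)[of "d-c" "c-b"] N(5) by simp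
  then have e3: "(d-c) \<bullet> N = 0" using N(4) by simp
  have "(a-d) \<bullet> (k3 *\<^sub>R N) = 0" using dot_cross_self(2)[of "a-d" "d-c"] N(7) by simp
  then have e4: "(a-d) \<bullet> N = 0" using N(6) by simp
  have "N$3 \<noteq> 0"
  proof
    assume "N$3 = 0"
    have "N \<bullet> b = N \<bullet> a" "N \<bullet> c = N \<bullet> a" "N \<bullet> d = N \<bullet> a"
    proof -
      have "N \<bullet> (b-a) = 0" "N \<bullet> (c-b) = 0" "N \<bullet> (d-c) = 0"
        using e1 e2 e3 by (simp_all add: inner_commute)
      then show "N \<bullet> b = N \<bullet> a" "N \<bullet> c = N \<bullet> a" "N \<bullet> d = N \<bullet> a"
        by (simp_all add: inner_diff_right)
    qed
    then show False using assms(2) N(1) \<open>N$3 = 0\<close> unfolding in_nonisotropic_plane_def by blast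
  qed
  then show ?thesis using e1 e2 e3 e4 by blast
qed

lemma quad3_edges_nz:
  assumes "convex_quad3 a b c d"
  shows "b - a \<noteq> 0 \<and> c - b \<noteq> 0 \<and> d - c \<noteq> 0 \<and> a - d \<noteq> 0"
proof -
  obtain N k1 k2 k3 k4 where N: "N \<noteq> 0" "k1 > 0" "cross3 (b - a) (c - b) = k1 *\<^sub>R N"
    "k2 > 0" "cross3 (c - b) (d - c) = k2 *\<^sub>R N"
    "k3 > 0" "cross3 (d - c) (a - d) = k3 *\<^sub>R N"
    "k4 > 0" "cross3 (a - d) (b - a) = k4 *\<^sub>R N"
    using assms(1) unfolding convex_quad3_def by blast
  show ?thesis using N by (metis cross_zero_left scaleR_eq_0_iff order_less_irrefl)
qed

lemma quad3_to_quad2: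
  assumes "convex_quad3 a b c d" "N$3 \<noteq> 0"
    "(b-a) \<bullet> N = 0" "(c-b) \<bullet> N = 0" "(d-c) \<bullet> N = 0" "(a-d) \<bullet> N = 0"
  shows "convex_quad2 (top_view a) (top_view b) (top_view c) (top_view d)"
proof -
  obtain M k1 k2 k3 k4 where M: "M \<noteq> 0" "k1 > 0" "cross3 (b - a) (c - b) = k1 *\<^sub>R M"
    "k2 > 0" "cross3 (c - b) (d - c) = k2 *\<^sub>R M"
    "k3 > 0" "cross3 (d - c) (a - d) = k3 *\<^sub>R M"
    "k4 > 0" "cross3 (a - d) (b - a) = k4 *\<^sub>R M"
    using assms(1) unfolding convex_quad3_def by blast
  have c1: "cross2 (top_view b - top_view a) (top_view c - top_view b) = k1 * M$3"
    using arg_cong[OF M(3), of "\<lambda>x. x$3"] by (simp add: cross3_3 top_view_diff)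
  have c2: "cross2 (top_view c - top_view b) (top_view d - top_view c) = k2 * M$3"
    using arg_cong[OF M(5), of "\<lambda>x. x$3"] by (simp add: cross3_3 top_view_diff)
  have c3: "cross2 (top_view d - top_view c) (top_view a - top_view d) = k3 * M$3"
    using arg_cong[OF M(7), of "\<lambda>x. x$3"] by (simp add: cross3_3 top_view_diff)
  have c4: "cross2 (top_view a - top_view d) (top_view b - top_view a) = k4 * M$3"
    using arg_cong[OF M(9), of "\<lambda>x. x$3"] by (simp add: cross3_3 top_view_diff)
  have "M$3 \<noteq> 0"
  proof
    assume "M$3 = 0"
    then have "cross3 (b - a) (c - b) = 0"
      using cross_perp[OF assms(3,4,2)] c1 by (simp add: top_view_diff)
    with M(1,2,3) show False by simp
  qed
  show ?thesis
  proof (cases "M$3 > 0")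
    case True
    then show ?thesis unfolding convex_quad2_def using c1 c2 c3 c4 M
      by (intro exI[of _ 1]) simp
  next
    case False
    with \<open>M$3 \<noteq> 0\<close> have "M$3 < 0" by simp
    then show ?thesis unfolding convex_quad2_def using c1 c2 c3 c4 M
      by (intro exI[of _ "-1"]) (simp add: mult_pos_neg)
  qed
qed

lemma quad2_to_quad3:
  assumes "convex_quad2 (top_view a) (top_view b) (top_view c) (top_view d)" "N$3 \<noteq> 0"
    "(b-a) \<bullet> N = 0" "(c-b) \<bullet> N = 0" "(d-c) \<bullet> N = 0" "(a-d) \<bullet> N = 0"
  shows "convex_quad3 a b c d"
proof -
  obtain s :: real where s: "s = 1 \<or> s = -1"
    "s * cross2 (top_view b - top_view a) (top_view c - top_view b) > 0"
    "s * cross2 (top_view c - top_view b) (top_view d - top_view c) > 0"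
    "s * cross2 (top_view d - top_view c) (top_view a - top_view d) > 0"
    "s * cross2 (top_view a - top_view d) (top_view b - top_view a) > 0"
    using assms(1) unfolding convex_quad2_def by blast
  have ss: "s * s = 1" using s(1) by auto
  have key: "cross3 u v = (s * cross2 (top_view u) (top_view v)) *\<^sub>R ((s / N$3) *\<^sub>R N)"
    if "u \<bullet> N = 0" "v \<bullet> N = 0" for u v
  proof -
    have "(s * cross2 (top_view u) (top_view v)) *\<^sub>R ((s / N$3) *\<^sub>R N)
        = ((s * s) * cross2 (top_view u) (top_view v) / N$3) *\<^sub>R N" by simp
    then show ?thesis using cross_perp[OF that assms(2)] ss by simp
  qed
  have nz: "(s / N$3) *\<^sub>R N \<noteq> 0" using assms(2) s(1) by auto
  show ?thesis unfolding convex_quad3_def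
    apply (rule exI[of _ "(s / N$3) *\<^sub>R N"])
    using nz key[OF assms(3,4)] key[OF assms(4,5)] key[OF assms(5,6)] key[OF assms(6,3)] s(2-5)
    by (auto simp: top_view_diff)
qed

lemma face_cover:
  assumes "1 \<le> m" "1 \<le> n" "\<forall>i<m. \<forall>j<n. PI i j \<and> PJ (Suc i) j \<and> PI i (Suc j) \<and> PJ i j"
  shows "(\<forall>i<m. \<forall>j\<le>n. PI i j) \<and> (\<forall>i\<le>m. \<forall>j<n. PJ i j)"
proof (intro conjI allI impI)
  fix i j assume "i < m" "j \<le> n"
  show "PI i j"
  proof (cases "j < n")
    case True then show ?thesis using assms(3) \<open>i < m\<close> by blast
  next
    case False
    then have "j = Suc (n - 1)" "n - 1 < n" using \<open>j \<le> n\<close> assms(2) by auto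
    moreover have "PI i (Suc (n - 1))" using assms(3) \<open>i < m\<close> \<open>n - 1 < n\<close> by blast
    ultimately show ?thesis by simp
  qed
next
  fix i j assume "i \<le> m" "j < n"
  show "PJ i j"
  proof (cases "i < m")
    case True then show ?thesis using assms(3) \<open>j < n\<close> by blast
  next
    case False
    then have "i = Suc (m - 1)" "m - 1 < m" using \<open>i \<le> m\<close> assms(1) by auto
    moreover have "PJ (Suc (m - 1)) j" using assms(3) \<open>j < n\<close> \<open>m - 1 < m\<close> by blast
    ultimately show ?thesis by simp
  qed
qed

lemma grid_const:
  fixes G H :: "nat \<Rightarrow> nat \<Rightarrow> 'a::ab_group_add"
  assumes A1: "\<forall>i<m. \<forall>j\<le>n. G (Suc i) j - G i j = H (Suc i) j - H i j"
     and A2: "\<forall>i\<le>m. \<forall>j<n. G i (Suc j) - G i j = H i (Suc j) - H i j"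
  shows "\<forall>i\<le>m. \<forall>j\<le>n. G i j - H i j = G 0 0 - H 0 0"
proof -
  have col: "i \<le> m \<longrightarrow> G i 0 - H i 0 = G 0 0 - H 0 0" for i
  proof (induction i)
    case 0 then show ?case by simp
  next
    case (Suc i)
    show ?case
    proof
      assume "Suc i \<le> m"
      then have "i < m" "i \<le> m" by auto
      then have e: "G (Suc i) 0 - G i 0 = H (Suc i) 0 - H i 0" using A1 by blast
      have "G (Suc i) 0 - H (Suc i) 0 = (G (Suc i) 0 - G i 0) + (G i 0 - H i 0) - (H (Suc i) 0 - H i 0)"
        by (simp add: algebra_simps)
      also have "\<dots> = G i 0 - H i 0" using e by simp
      also have "\<dots> = G 0 0 - H 0 0" using Suc.IH \<open>i \<le> m\<close> by blast
      finally show "G (Suc i) 0 - H (Suc i) 0 = G 0 0 - H 0 0" .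
    qed
  qed
  have row: "j \<le> n \<longrightarrow> G i j - H i j = G 0 0 - H 0 0" if "i \<le> m" for i j
  proof (induction j)
    case 0 then show ?case using col that by blast
  next
    case (Suc j)
    show ?case
    proof
      assume "Suc j \<le> n"
      then have "j < n" "j \<le> n" by auto
      then have e: "G i (Suc j) - G i j = H i (Suc j) - H i j" using A2 that by blast
      have "G i (Suc j) - H i (Suc j) = (G i (Suc j) - G i j) + (G i j - H i j) - (H i (Suc j) - H i j)"
        by (simp add: algebra_simps)
      also have "\<dots> = G i j - H i j" using e by simp
      also have "\<dots> = G 0 0 - H 0 0" using Suc.IH \<open>j \<le> n\<close> by blast
      finally show "G i (Suc j) - H i (Suc j) = G 0 0 - H 0 0" .
    qed
  qed
  show ?thesis using row by blast
qed

lemma coeff_of_mult: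
  fixes v :: "'a::real_inner"
  assumes "v \<noteq> 0" "u = \<mu> *\<^sub>R v"
  shows "\<mu> = (v \<bullet> u) / (v \<bullet> v)"
  using assms by simp

lemma ivt_pos:
  fixes f :: "real \<Rightarrow> real"
  assumes fc: "continuous_on {a..b} f" and t0: "t0 \<in> {a..b}" and tau: "\<tau> \<in> {a..b}"
    and f0: "f t0 > 0" and fnz: "\<forall>\<sigma>\<in>{a..b}. f \<sigma> \<noteq> 0"
  shows "f \<tau> > 0"
proof (rule ccontr)
  assume "\<not> f \<tau> > 0"
  then have le: "f \<tau> \<le> 0" by simp
  show False
  proof (cases "\<tau> \<le> t0")
    case True
    have sub: "{\<tau>..t0} \<subseteq> {a..b}" using t0 tau by auto
    have "continuous_on {\<tau>..t0} f" using fc sub by (rule continuous_on_subset)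
    then obtain x where x: "\<tau> \<le> x" "x \<le> t0" "f x = 0" using IVT'[of f \<tau> 0 t0] le f0 True by force
    have "x \<in> {a..b}" using x sub by auto
    then show False using fnz x(3) by blast
  next
    case False
    have sub: "{t0..\<tau>} \<subseteq> {a..b}" using t0 tau by auto
    have "continuous_on {t0..\<tau>} f" using fc sub by (rule continuous_on_subset)
    then obtain x where x: "t0 \<le> x" "x \<le> \<tau>" "f x = 0" using IVT2'[of f \<tau> 0 t0] le f0 False by force
    have "x \<in> {a..b}" using x sub by auto
    then show False using fnz x(3) by blast
  qed
qed

lemma pos_mult:
  fixes u :: "real \<Rightarrow> 'a::real_inner"
  assumes "continuous_on {a..b} u" "t0 \<in> {a..b}" "u t0 = v" "v \<noteq> 0"
    "\<forall>\<sigma>\<in>{a..b}. u \<sigma> \<noteq> 0 \<and> (\<exists>\<mu>. u \<sigma> = \<mu> *\<^sub>R v)" "\<tau> \<in> {a..b}"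
  shows "\<exists>\<mu>>0. u \<tau> = \<mu> *\<^sub>R v"
proof -
  define f where "f \<sigma> = (v \<bullet> u \<sigma>) / (v \<bullet> v)" for \<sigma>
  have h: "continuous_on {a..b} (\<lambda>\<sigma>. v \<bullet> u \<sigma>)"
    by (rule continuous_on_inner[OF continuous_on_const assms(1)])
  have fc: "continuous_on {a..b} f" unfolding f_def
    by (rule continuous_on_divide[OF h continuous_on_const]) (use assms(4) in simp)
  have uf: "u \<sigma> = f \<sigma> *\<^sub>R v" if "\<sigma> \<in> {a..b}" for \<sigma>
  proof -
    have "\<exists>\<mu>. u \<sigma> = \<mu> *\<^sub>R v" using bspec[OF assms(5) that] by (rule conjunct2)
    then obtain \<mu> where mu: "u \<sigma> = \<mu> *\<^sub>R v" by (elim exE)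
    have "\<mu> = f \<sigma>" unfolding f_def by (rule coeff_of_mult[OF assms(4) mu])
    then show ?thesis using mu by simp
  qed
  have fnz: "f \<sigma> \<noteq> 0" if "\<sigma> \<in> {a..b}" for \<sigma>
  proof
    assume "f \<sigma> = 0"
    then have "u \<sigma> = 0" using uf[OF that] by simp
    then show False using bspec[OF assms(5) that] by simp
  qed
  have f0: "f t0 = 1" unfolding f_def using assms(3,4) by simp
  have "f \<tau> > 0" using ivt_pos[OF fc assms(2,6)] f0 fnz by simp
  then show ?thesis using uf[OF assms(6)] by blast
qed


lemma mat_scale: "(A::real^'n^'m) *v (c *\<^sub>R x) = c *\<^sub>R (A *v x)"
  by (simp add: vec_eq_iff matrix_vector_mult_def sum_distrib_left algebra_simps)

lemma edge_eq:
  fixes u :: "real \<Rightarrow> real^3"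
  assumes "continuous_on {a..b} u" "t0 \<in> {a..b}" "u t0 = v" "v \<noteq> 0"
    "\<forall>\<sigma>\<in>{a..b}. u \<sigma> \<noteq> 0 \<and> (\<exists>\<mu>. u \<sigma> = \<mu> *\<^sub>R v)" "s \<in> {a..b}" "t \<in> {a..b}"
    "top_view v \<noteq> 0" "orthogonal_matrix A" "top_view (u t) = A *v top_view (u s)"
  shows "u t = u s"
proof -
  obtain \<mu>s where ms: "\<mu>s > 0" "u s = \<mu>s *\<^sub>R v" using pos_mult[OF assms(1-5) assms(6)] by (elim exE conjE)
  obtain \<mu>t where mt: "\<mu>t > 0" "u t = \<mu>t *\<^sub>R v" using pos_mult[OF assms(1-5) assms(7)] by (elim exE conjE)
  have "\<mu>t *\<^sub>R top_view v = \<mu>s *\<^sub>R (A *v top_view v)"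
    using assms(10) ms(2) mt(2) by (simp add: top_view_scale mat_scale)
  then have "norm (\<mu>t *\<^sub>R top_view v) = norm (\<mu>s *\<^sub>R (A *v top_view v))" by simp
  then have "\<mu>t * norm (top_view v) = \<mu>s * norm (top_view v)"
    using ms(1) mt(1) orth_norm[OF assms(9)] by simp
  then have "\<mu>t = \<mu>s" using assms(8) by simp
  then show ?thesis using ms mt by simp
qed

lemma perp_fwd: "x - y = l *\<^sub>R e \<Longrightarrow> e \<bullet> N = 0 \<Longrightarrow> (x - y) \<bullet> N = 0"
  by simp

lemma perp_bwd: "y - x = l *\<^sub>R e \<Longrightarrow> e \<bullet> N = 0 \<Longrightarrow> (x - y) \<bullet> N = 0"
proof -
  assume "y - x = l *\<^sub>R e" "e \<bullet> N = 0"
  then have "(y - x) \<bullet> N = 0" by simp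
  then show "(x - y) \<bullet> N = 0" by (simp add: inner_diff_left)
qed

lemma net_faces:
  assumes "is_net3 m n F"
    "\<forall>i<m. \<forall>j<n. in_nonisotropic_plane (F i j) (F (Suc i) j) (F (Suc i) (Suc j)) (F i (Suc j))"
    "i < m" "j < n"
  shows "\<exists>N. N$3 \<noteq> 0 \<and> (F (Suc i) j - F i j) \<bullet> N = 0 \<and> (F (Suc i) (Suc j) - F (Suc i) j) \<bullet> N = 0
     \<and> (F (Suc i) (Suc j) - F i (Suc j)) \<bullet> N = 0 \<and> (F i (Suc j) - F i j) \<bullet> N = 0"
proof -
  have q: "convex_quad3 (F i j) (F (Suc i) j) (F (Suc i) (Suc j)) (F i (Suc j))"
    using assms(1,3,4) unfolding is_net3_def by blast
  have p: "in_nonisotropic_plane (F i j) (F (Suc i) j) (F (Suc i) (Suc j)) (F i (Suc j))"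
    using assms(2,3,4) by blast
  obtain N where N: "N$3 \<noteq> 0" "(F (Suc i) j - F i j) \<bullet> N = 0" "(F (Suc i) (Suc j) - F (Suc i) j) \<bullet> N = 0"
    "(F i (Suc j) - F (Suc i) (Suc j)) \<bullet> N = 0" "(F i j - F i (Suc j)) \<bullet> N = 0"
    using face_normal[OF q p] by (elim exE conjE)
  show ?thesis
    apply (rule exI[of _ N])
    using N by (simp add: inner_diff_left)
qed

lemma net_edges_nz:
  assumes "is_net3 m n F" "i < m" "j < n"
  shows "F (Suc i) j - F i j \<noteq> 0 \<and> F (Suc i) (Suc j) - F (Suc i) j \<noteq> 0
     \<and> F (Suc i) (Suc j) - F i (Suc j) \<noteq> 0 \<and> F i (Suc j) - F i j \<noteq> 0"
proof -
  have q: "convex_quad3 (F i j) (F (Suc i) j) (F (Suc i) (Suc j)) (F i (Suc j))"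
    using assms unfolding is_net3_def by blast
  show ?thesis using quad3_edges_nz[OF q] by (metis eq_iff_diff_eq_0)
qed

lemma net_all_edges_nz:
  assumes "is_net3 m n F" "1 \<le> m" "1 \<le> n"
  shows "(\<forall>i<m. \<forall>j\<le>n. F (Suc i) j - F i j \<noteq> 0) \<and> (\<forall>i\<le>m. \<forall>j<n. F i (Suc j) - F i j \<noteq> 0)"
  by (rule face_cover[OF assms(2,3)]) (use net_edges_nz[OF assms(1)] in blast)


lemma net_top_nz:
  assumes "is_net3 m n F" "1 \<le> m" "1 \<le> n"
    "\<forall>i<m. \<forall>j<n. in_nonisotropic_plane (F i j) (F (Suc i) j) (F (Suc i) (Suc j)) (F i (Suc j))"
  shows "(\<forall>i<m. \<forall>j\<le>n. top_view (F (Suc i) j - F i j) \<noteq> 0) \<and> (\<forall>i\<le>m. \<forall>j<n. top_view (F i (Suc j) - F i j) \<noteq> 0)"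
proof (rule face_cover[OF assms(2,3)], intro allI impI)
  fix i j assume ij: "i < m" "j < n"
  obtain N where N: "N$3 \<noteq> 0" "(F (Suc i) j - F i j) \<bullet> N = 0" "(F (Suc i) (Suc j) - F (Suc i) j) \<bullet> N = 0"
     "(F (Suc i) (Suc j) - F i (Suc j)) \<bullet> N = 0" "(F i (Suc j) - F i j) \<bullet> N = 0"
    using net_faces[OF assms(1,4) ij] by (elim exE conjE)
  have nz: "F (Suc i) j - F i j \<noteq> 0" "F (Suc i) (Suc j) - F (Suc i) j \<noteq> 0"
     "F (Suc i) (Suc j) - F i (Suc j) \<noteq> 0" "F i (Suc j) - F i j \<noteq> 0"
    using net_edges_nz[OF assms(1) ij] by auto
  show "top_view (F (Suc i) j - F i j) \<noteq> 0 \<and> top_view (F (Suc i) (Suc j) - F (Suc i) j) \<noteq> 0 \<and>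
        top_view (F (Suc i) (Suc j) - F i (Suc j)) \<noteq> 0 \<and> top_view (F i (Suc j) - F i j) \<noteq> 0"
    using top_nonzero[OF N(2) N(1) nz(1)] top_nonzero[OF N(3) N(1) nz(2)]
      top_nonzero[OF N(4) N(1) nz(3)] top_nonzero[OF N(5) N(1) nz(4)] by blast
qed


lemma forward:
  fixes m n :: nat and F :: "nat \<Rightarrow> nat \<Rightarrow> real^3"
  assumes m1: "1 \<le> m" and n1: "1 \<le> n"
    and net: "is_net3 m n F"
    and iso: "\<forall>i<m. \<forall>j<n. in_nonisotropic_plane (F i j) (F (Suc i) j) (F (Suc i) (Suc j)) (F i (Suc j))"
    and def: "deformable_iso m n F"
  shows "deformable_planar m n (top_view_net F)"
proof -
  obtain a b t0 and P :: "real \<Rightarrow> nat \<Rightarrow> nat \<Rightarrow> real^3" where H: "a < b \<and> t0 \<in> {a..b} \<and>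
        (\<forall>i\<le>m. \<forall>j\<le>n. P t0 i j = F i j) \<and>
        (\<forall>i\<le>m. \<forall>j\<le>n. continuous_on {a..b} (\<lambda>t. P t i j)) \<and>
        (\<forall>t\<in>{a..b}. is_net3 m n (P t) \<and> nets_parallel m n F (P t) \<and>
           (\<forall>i<m. \<forall>j<n. iso_quad_area (P t i j) (P t (Suc i) j) (P t (Suc i) (Suc j)) (P t i (Suc j))
                        = iso_quad_area (F i j) (F (Suc i) j) (F (Suc i) (Suc j)) (F i (Suc j)))) \<and>
        (\<forall>s\<in>{a..b}. \<forall>t\<in>{a..b}. s \<noteq> t \<longrightarrow> \<not> iso_congruent m n (P s) (P t))"
    using def unfolding deformable_iso_def deformable_gen_def by (elim exE) (rule that, assumption)
  note ab = conjunct1[OF H]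
  note t0 = conjunct1[OF conjunct2[OF H]]
  note P0 = conjunct1[OF conjunct2[OF conjunct2[OF H]]]
  note Pc = conjunct1[OF conjunct2[OF conjunct2[OF conjunct2[OF H]]]]
  note Pt = conjunct1[OF conjunct2[OF conjunct2[OF conjunct2[OF conjunct2[OF H]]]]]
  note Pnc = conjunct2[OF conjunct2[OF conjunct2[OF conjunct2[OF conjunct2[OF H]]]]]
  define Q where "Q t = top_view_net (P t)" for t
  have Fnz: "(\<forall>i<m. \<forall>j\<le>n. F (Suc i) j - F i j \<noteq> 0) \<and> (\<forall>i\<le>m. \<forall>j<n. F i (Suc j) - F i j \<noteq> 0)"
    by (rule net_all_edges_nz[OF net m1 n1])
  have Ftop: "(\<forall>i<m. \<forall>j\<le>n. top_view (F (Suc i) j - F i j) \<noteq> 0) \<and> (\<forall>i\<le>m. \<forall>j<n. top_view (F i (Suc j) - F i j) \<noteq> 0)"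
    by (rule net_top_nz[OF net m1 n1 iso])
  have parI: "\<exists>l. P t (Suc i) j - P t i j = l *\<^sub>R (F (Suc i) j - F i j)"
    if "t \<in> {a..b}" "i < m" "j \<le> n" for t i j
  proof -
    have "nets_parallel m n F (P t)" using conjunct1[OF conjunct2[OF bspec[OF Pt that(1)]]] .
    then show ?thesis using that(2,3) unfolding nets_parallel_def by blast
  qed
  have parJ: "\<exists>l. P t i (Suc j) - P t i j = l *\<^sub>R (F i (Suc j) - F i j)"
    if "t \<in> {a..b}" "i \<le> m" "j < n" for t i j
  proof -
    have "nets_parallel m n F (P t)" using conjunct1[OF conjunct2[OF bspec[OF Pt that(1)]]] .
    then show ?thesis using that(2,3) unfolding nets_parallel_def by blast
  qed
  have Pnet: "is_net3 m n (P t)" if "t \<in> {a..b}" for t using conjunct1[OF bspec[OF Pt that]] .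
  have isnet2: "is_net2 m n (Q t)" if t: "t \<in> {a..b}" for t
    unfolding is_net2_def
  proof (intro allI impI)
    fix i j assume ij: "i < m" "j < n"
    obtain N where N: "N$3 \<noteq> 0" "(F (Suc i) j - F i j) \<bullet> N = 0" "(F (Suc i) (Suc j) - F (Suc i) j) \<bullet> N = 0"
       "(F (Suc i) (Suc j) - F i (Suc j)) \<bullet> N = 0" "(F i (Suc j) - F i j) \<bullet> N = 0"
      using net_faces[OF net iso ij] by (elim exE conjE)
    obtain l1 where e1: "P t (Suc i) j - P t i j = l1 *\<^sub>R (F (Suc i) j - F i j)"
      using parI[OF t] ij by (meson less_imp_le)
    obtain l2 where e2: "P t (Suc i) (Suc j) - P t (Suc i) j = l2 *\<^sub>R (F (Suc i) (Suc j) - F (Suc i) j)"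
      using parJ[OF t, of "Suc i" j] ij by (meson Suc_leI)
    obtain l3 where e3: "P t (Suc i) (Suc j) - P t i (Suc j) = l3 *\<^sub>R (F (Suc i) (Suc j) - F i (Suc j))"
      using parI[OF t, of i "Suc j"] ij by (meson Suc_leI)
    obtain l4 where e4: "P t i (Suc j) - P t i j = l4 *\<^sub>R (F i (Suc j) - F i j)"
      using parJ[OF t] ij by (meson less_imp_le)
    have q: "convex_quad3 (P t i j) (P t (Suc i) j) (P t (Suc i) (Suc j)) (P t i (Suc j))"
      using Pnet[OF t] ij unfolding is_net3_def by blast
    show "convex_quad2 (Q t i j) (Q t (Suc i) j) (Q t (Suc i) (Suc j)) (Q t i (Suc j))"
      unfolding Q_def top_view_net_def
      by (rule quad3_to_quad2[OF q N(1) perp_fwd[OF e1 N(2)] perp_fwd[OF e2 N(3)] perp_bwd[OF e3 N(4)] perp_bwd[OF e4 N(5)]])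
  qed
  have Qpar: "nets_parallel m n (top_view_net F) (Q t)" if t: "t \<in> {a..b}" for t
    unfolding nets_parallel_def
  proof (intro conjI allI impI)
    fix i j assume ij: "i < m" "j \<le> n"
    obtain l where e: "P t (Suc i) j - P t i j = l *\<^sub>R (F (Suc i) j - F i j)" using parI[OF t ij] by blast
    have "top_view (P t (Suc i) j - P t i j) = top_view (l *\<^sub>R (F (Suc i) j - F i j))" using e by simp
    then have "Q t (Suc i) j - Q t i j = l *\<^sub>R (top_view_net F (Suc i) j - top_view_net F i j)"
      unfolding Q_def top_view_net_def by (simp add: top_view_diff top_view_scale)
    then show "\<exists>l. Q t (Suc i) j - Q t i j = l *\<^sub>R (top_view_net F (Suc i) j - top_view_net F i j)" by blast
  next
    fix i j assume ij: "i \<le> m" "j < n"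
    obtain l where e: "P t i (Suc j) - P t i j = l *\<^sub>R (F i (Suc j) - F i j)" using parJ[OF t ij] by blast
    have "top_view (P t i (Suc j) - P t i j) = top_view (l *\<^sub>R (F i (Suc j) - F i j))" using e by simp
    then have "Q t i (Suc j) - Q t i j = l *\<^sub>R (top_view_net F i (Suc j) - top_view_net F i j)"
      unfolding Q_def top_view_net_def by (simp add: top_view_diff top_view_scale)
    then show "\<exists>l. Q t i (Suc j) - Q t i j = l *\<^sub>R (top_view_net F i (Suc j) - top_view_net F i j)" by blast
  qed
  have Qarea: "\<forall>i<m. \<forall>j<n. quad_area2 (Q t i j) (Q t (Suc i) j) (Q t (Suc i) (Suc j)) (Q t i (Suc j))
       = quad_area2 (top_view_net F i j) (top_view_net F (Suc i) j) (top_view_net F (Suc i) (Suc j)) (top_view_net F i (Suc j))"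
    if t: "t \<in> {a..b}" for t
    using conjunct2[OF conjunct2[OF bspec[OF Pt t]]] unfolding Q_def top_view_net_def iso_quad_area_def .
  have Qc: "\<forall>i\<le>m. \<forall>j\<le>n. continuous_on {a..b} (\<lambda>t. Q t i j)"
  proof (intro allI impI)
    fix i j assume "i \<le> m" "j \<le> n"
    then have "continuous_on {a..b} (\<lambda>t. P t i j)" using Pc by blast
    then show "continuous_on {a..b} (\<lambda>t. Q t i j)" unfolding Q_def top_view_net_def
      by (rule continuous_on_top_view)
  qed
  have Q0: "\<forall>i\<le>m. \<forall>j\<le>n. Q t0 i j = top_view_net F i j"
    using P0 unfolding Q_def top_view_net_def by simp
  have Qnc: "\<not> eucl_congruent m n (Q s) (Q t)" if s: "s \<in> {a..b}" and t: "t \<in> {a..b}" and st: "s \<noteq> t" for s t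
  proof
    assume "eucl_congruent m n (Q s) (Q t)"
    then obtain A bb where A: "orthogonal_matrix A" and Ab: "\<forall>i\<le>m. \<forall>j\<le>n. Q t i j = A *v Q s i j + bb"
      unfolding eucl_congruent_def by blast
    have Pnz: "(\<forall>i<m. \<forall>j\<le>n. P \<sigma> (Suc i) j - P \<sigma> i j \<noteq> 0) \<and> (\<forall>i\<le>m. \<forall>j<n. P \<sigma> i (Suc j) - P \<sigma> i j \<noteq> 0)"
      if "\<sigma> \<in> {a..b}" for \<sigma>
      by (rule net_all_edges_nz[OF Pnet[OF that] m1 n1])
    have eI: "P t (Suc i) j - P t i j = P s (Suc i) j - P s i j" if ij: "i < m" "j \<le> n" for i j
    proof (rule edge_eq[of a b "\<lambda>\<sigma>. P \<sigma> (Suc i) j - P \<sigma> i j" t0 "F (Suc i) j - F i j" s t A])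
      show "continuous_on {a..b} (\<lambda>\<sigma>. P \<sigma> (Suc i) j - P \<sigma> i j)"
        using Pc ij by (intro continuous_on_diff) auto
      show "t0 \<in> {a..b}" by (rule t0)
      show "P t0 (Suc i) j - P t0 i j = F (Suc i) j - F i j" using P0 ij by simp
      show "F (Suc i) j - F i j \<noteq> 0" using Fnz ij by blast
      show "\<forall>\<sigma>\<in>{a..b}. P \<sigma> (Suc i) j - P \<sigma> i j \<noteq> 0 \<and> (\<exists>\<mu>. P \<sigma> (Suc i) j - P \<sigma> i j = \<mu> *\<^sub>R (F (Suc i) j - F i j))"
        using Pnz parI ij by blast
      show "s \<in> {a..b}" "t \<in> {a..b}" by (rule s, rule t)
      show "top_view (F (Suc i) j - F i j) \<noteq> 0" using Ftop ij by blast
      show "orthogonal_matrix A" by (rule A)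
      have "Q t (Suc i) j = A *v Q s (Suc i) j + bb" "Q t i j = A *v Q s i j + bb" using Ab ij by auto
      then show "top_view (P t (Suc i) j - P t i j) = A *v top_view (P s (Suc i) j - P s i j)"
        unfolding Q_def top_view_net_def by (simp add: top_view_diff matrix_vector_mult_diff_distrib)
    qed
    have eJ: "P t i (Suc j) - P t i j = P s i (Suc j) - P s i j" if ij: "i \<le> m" "j < n" for i j
    proof (rule edge_eq[of a b "\<lambda>\<sigma>. P \<sigma> i (Suc j) - P \<sigma> i j" t0 "F i (Suc j) - F i j" s t A])
      show "continuous_on {a..b} (\<lambda>\<sigma>. P \<sigma> i (Suc j) - P \<sigma> i j)"
        using Pc ij by (intro continuous_on_diff) auto
      show "t0 \<in> {a..b}" by (rule t0)
      show "P t0 i (Suc j) - P t0 i j = F i (Suc j) - F i j" using P0 ij by simp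
      show "F i (Suc j) - F i j \<noteq> 0" using Fnz ij by blast
      show "\<forall>\<sigma>\<in>{a..b}. P \<sigma> i (Suc j) - P \<sigma> i j \<noteq> 0 \<and> (\<exists>\<mu>. P \<sigma> i (Suc j) - P \<sigma> i j = \<mu> *\<^sub>R (F i (Suc j) - F i j))"
        using Pnz parJ ij by blast
      show "s \<in> {a..b}" "t \<in> {a..b}" by (rule s, rule t)
      show "top_view (F i (Suc j) - F i j) \<noteq> 0" using Ftop ij by blast
      show "orthogonal_matrix A" by (rule A)
      have "Q t i (Suc j) = A *v Q s i (Suc j) + bb" "Q t i j = A *v Q s i j + bb" using Ab ij by auto
      then show "top_view (P t i (Suc j) - P t i j) = A *v top_view (P s i (Suc j) - P s i j)"
        unfolding Q_def top_view_net_def by (simp add: top_view_diff matrix_vector_mult_diff_distrib)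
    qed
    have g: "\<forall>i\<le>m. \<forall>j\<le>n. P t i j - P s i j = P t 0 0 - P s 0 0"
      by (rule grid_const) (use eI eJ in blast)+
    have "iso_congruent m n (P s) (P t)"
      unfolding iso_congruent_def
    proof (intro exI allI impI)
      fix i j assume "i \<le> m" "j \<le> n"
      then have "P t i j - P s i j = P t 0 0 - P s 0 0" using g by blast
      then show "P t i j = iso_matrix 0 0 0 *v P s i j + (P t 0 0 - P s 0 0)"
        by (simp add: iso_id algebra_simps)
    qed
    then show False using Pnc s t st by blast
  qed
  show ?thesis unfolding deformable_planar_def deformable_gen_def
    apply (rule exI[of _ a], rule exI[of _ b], rule exI[of _ t0], rule exI[of _ Q])
    apply (intro conjI)
         apply (rule ab)
        apply (rule t0)
       apply (rule Q0)
      apply (rule Qc)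
     apply (intro ballI conjI)
       apply (erule isnet2)
      apply (erule Qpar)
     apply (erule Qarea)
    apply (intro ballI impI)
    apply (rule Qnc; assumption)
    done
qed


lemma cont_coef:
  fixes f g :: "real \<Rightarrow> real^2"
  assumes "continuous_on S f" "continuous_on S g"
  shows "continuous_on S (\<lambda>t. ((v \<bullet> (f t - g t)) / c) * d)"
proof -
  have "continuous_on S (\<lambda>t. v \<bullet> (f t - g t))"
    by (intro continuous_on_inner continuous_on_const continuous_on_diff assms)
  then have "continuous_on S (\<lambda>t. (v \<bullet> (f t - g t)) * (d / c))" by (rule continuous_on_mult_right)
  moreover have "(\<lambda>t. ((v \<bullet> (f t - g t)) / c) * d) = (\<lambda>t. (v \<bullet> (f t - g t)) * (d / c))"
    by (simp add: fun_eq_iff)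
  ultimately show ?thesis by simp
qed

lemma backward:
  fixes m n :: nat and F :: "nat \<Rightarrow> nat \<Rightarrow> real^3"
  assumes m1: "1 \<le> m" and n1: "1 \<le> n"
    and net: "is_net3 m n F"
    and iso: "\<forall>i<m. \<forall>j<n. in_nonisotropic_plane (F i j) (F (Suc i) j) (F (Suc i) (Suc j)) (F i (Suc j))"
    and def: "deformable_planar m n (top_view_net F)"
  shows "deformable_iso m n F"
proof -
  obtain a b t0 and Q :: "real \<Rightarrow> nat \<Rightarrow> nat \<Rightarrow> real^2" where H: "a < b \<and> t0 \<in> {a..b} \<and>
        (\<forall>i\<le>m. \<forall>j\<le>n. Q t0 i j = top_view_net F i j) \<and>
        (\<forall>i\<le>m. \<forall>j\<le>n. continuous_on {a..b} (\<lambda>t. Q t i j)) \<and>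
        (\<forall>t\<in>{a..b}. is_net2 m n (Q t) \<and> nets_parallel m n (top_view_net F) (Q t) \<and>
           (\<forall>i<m. \<forall>j<n. quad_area2 (Q t i j) (Q t (Suc i) j) (Q t (Suc i) (Suc j)) (Q t i (Suc j))
                        = quad_area2 (top_view_net F i j) (top_view_net F (Suc i) j) (top_view_net F (Suc i) (Suc j)) (top_view_net F i (Suc j)))) \<and>
        (\<forall>s\<in>{a..b}. \<forall>t\<in>{a..b}. s \<noteq> t \<longrightarrow> \<not> eucl_congruent m n (Q s) (Q t))"
    using def unfolding deformable_planar_def deformable_gen_def by (elim exE) (rule that, assumption)
  note ab = conjunct1[OF H]
  note t0 = conjunct1[OF conjunct2[OF H]]
  note Q0 = conjunct1[OF conjunct2[OF conjunct2[OF H]]]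
  note Qc = conjunct1[OF conjunct2[OF conjunct2[OF conjunct2[OF H]]]]
  note Qt = conjunct1[OF conjunct2[OF conjunct2[OF conjunct2[OF conjunct2[OF H]]]]]
  note Qnc = conjunct2[OF conjunct2[OF conjunct2[OF conjunct2[OF conjunct2[OF H]]]]]
  have Qnet: "is_net2 m n (Q t)" if "t \<in> {a..b}" for t using conjunct1[OF bspec[OF Qt that]] .
  have Qpar: "nets_parallel m n (top_view_net F) (Q t)" if "t \<in> {a..b}" for t
    using conjunct1[OF conjunct2[OF bspec[OF Qt that]]] .
  have Qarea: "\<forall>i<m. \<forall>j<n. quad_area2 (Q t i j) (Q t (Suc i) j) (Q t (Suc i) (Suc j)) (Q t i (Suc j))
                        = quad_area2 (top_view_net F i j) (top_view_net F (Suc i) j) (top_view_net F (Suc i) (Suc j)) (top_view_net F i (Suc j))"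
    if "t \<in> {a..b}" for t using conjunct2[OF conjunct2[OF bspec[OF Qt that]]] .
  define vI where "vI i j = top_view (F (Suc i) j - F i j)" for i j
  define vJ where "vJ i j = top_view (F i (Suc j) - F i j)" for i j
  define lI where "lI t i j = (vI i j \<bullet> (Q t (Suc i) j - Q t i j)) / (vI i j \<bullet> vI i j)" for t i j
  define lJ where "lJ t i j = (vJ i j \<bullet> (Q t i (Suc j) - Q t i j)) / (vJ i j \<bullet> vJ i j)" for t i j
  define dzI where "dzI t i j = lI t i j * (F (Suc i) j - F i j)$3" for t i j
  define dzJ where "dzJ t i j = lJ t i j * (F i (Suc j) - F i j)$3" for t i j
  define Z where "Z t i j = F 0 0 $3 + (\<Sum>k<i. dzI t k 0) + (\<Sum>k<j. dzJ t i k)" for t i j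
  define P where "P t i j = lift (Q t i j) (Z t i j)" for t i j
  have Ftop: "(\<forall>i<m. \<forall>j\<le>n. top_view (F (Suc i) j - F i j) \<noteq> 0) \<and> (\<forall>i\<le>m. \<forall>j<n. top_view (F i (Suc j) - F i j) \<noteq> 0)"
    by (rule net_top_nz[OF net m1 n1 iso])
  have vInz: "vI i j \<noteq> 0" if "i < m" "j \<le> n" for i j using Ftop that unfolding vI_def by blast
  have vJnz: "vJ i j \<noteq> 0" if "i \<le> m" "j < n" for i j using Ftop that unfolding vJ_def by blast
  have QI: "Q t (Suc i) j - Q t i j = lI t i j *\<^sub>R vI i j" if t: "t \<in> {a..b}" and ij: "i < m" "j \<le> n" for t i j
  proof -
    obtain l where l: "Q t (Suc i) j - Q t i j = l *\<^sub>R (top_view_net F (Suc i) j - top_view_net F i j)"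
      using Qpar[OF t] ij unfolding nets_parallel_def by blast
    then have l2: "Q t (Suc i) j - Q t i j = l *\<^sub>R vI i j" unfolding vI_def top_view_net_def by (simp add: top_view_diff)
    have "l = lI t i j" unfolding lI_def by (rule coeff_of_mult[OF vInz[OF ij] l2])
    then show ?thesis using l2 by simp
  qed
  have QJ: "Q t i (Suc j) - Q t i j = lJ t i j *\<^sub>R vJ i j" if t: "t \<in> {a..b}" and ij: "i \<le> m" "j < n" for t i j
  proof -
    obtain l where l: "Q t i (Suc j) - Q t i j = l *\<^sub>R (top_view_net F i (Suc j) - top_view_net F i j)"
      using Qpar[OF t] ij unfolding nets_parallel_def by blast
    then have l2: "Q t i (Suc j) - Q t i j = l *\<^sub>R vJ i j" unfolding vJ_def top_view_net_def by (simp add: top_view_diff)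
    have "l = lJ t i j" unfolding lJ_def by (rule coeff_of_mult[OF vJnz[OF ij] l2])
    then show ?thesis using l2 by simp
  qed
  have closure: "dzI t i j + dzJ t (Suc i) j = dzJ t i j + dzI t i (Suc j)"
    if t: "t \<in> {a..b}" and ij: "i < m" "j < n" for t i j
  proof -
    obtain N where N: "N$3 \<noteq> 0" "(F (Suc i) j - F i j) \<bullet> N = 0" "(F (Suc i) (Suc j) - F (Suc i) j) \<bullet> N = 0"
       "(F (Suc i) (Suc j) - F i (Suc j)) \<bullet> N = 0" "(F i (Suc j) - F i j) \<bullet> N = 0"
      using net_faces[OF net iso ij] by (elim exE conjE)
    define w :: "real^2" where "w = vector [- N$1 / N$3, - N$2 / N$3]"
    have conv: "l * e$3 = w \<bullet> d" if "e \<bullet> N = 0" "d = l *\<^sub>R top_view e" for l e d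
      using edge_z[OF that(1) N(1)] that(2) unfolding w_def by simp
    have i1: "i < m" "j \<le> n" "Suc i \<le> m" "j < n" "Suc j \<le> n" "i \<le> m" using ij by auto
    have d1: "dzI t i j = w \<bullet> (Q t (Suc i) j - Q t i j)"
      unfolding dzI_def by (rule conv[OF N(2)]) (simp add: QI[OF t i1(1,2)] vI_def)
    have d2: "dzJ t (Suc i) j = w \<bullet> (Q t (Suc i) (Suc j) - Q t (Suc i) j)"
      unfolding dzJ_def by (rule conv[OF N(3)]) (simp add: QJ[OF t i1(3,4)] vJ_def)
    have d3: "dzI t i (Suc j) = w \<bullet> (Q t (Suc i) (Suc j) - Q t i (Suc j))"
      unfolding dzI_def by (rule conv[OF N(4)]) (simp add: QI[OF t i1(1,5)] vI_def)
    have d4: "dzJ t i j = w \<bullet> (Q t i (Suc j) - Q t i j)"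
      unfolding dzJ_def by (rule conv[OF N(5)]) (simp add: QJ[OF t i1(6,4)] vJ_def)
    show ?thesis unfolding d1 d2 d3 d4 by (simp add: inner_diff_right)
  qed
  have ZJ: "Z t i (Suc j) - Z t i j = dzJ t i j" for t i j
    unfolding Z_def by simp
  have ZI: "j \<le> n \<longrightarrow> Z t (Suc i) j - Z t i j = dzI t i j" if t: "t \<in> {a..b}" and i: "i < m" for t i j
  proof (induction j)
    case 0 then show ?case unfolding Z_def by simp
  next
    case (Suc j)
    show ?case
    proof
      assume "Suc j \<le> n"
      then have j: "j < n" "j \<le> n" by auto
      have "Z t (Suc i) (Suc j) - Z t i (Suc j) = (Z t (Suc i) j + dzJ t (Suc i) j) - (Z t i j + dzJ t i j)"
        using ZJ[of t "Suc i" j] ZJ[of t i j] by (simp add: algebra_simps)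
      also have "\<dots> = (Z t (Suc i) j - Z t i j) + dzJ t (Suc i) j - dzJ t i j" by (simp add: algebra_simps)
      also have "\<dots> = dzI t i j + dzJ t (Suc i) j - dzJ t i j" using Suc.IH j(2) by simp
      also have "\<dots> = dzI t i (Suc j)" using closure[OF t i j(1)] by simp
      finally show "Z t (Suc i) (Suc j) - Z t i (Suc j) = dzI t i (Suc j)" .
    qed
  qed
  have Ptop: "top_view (P t i j) = Q t i j" for t i j unfolding P_def by simp
  have PI: "P t (Suc i) j - P t i j = lI t i j *\<^sub>R (F (Suc i) j - F i j)"
    if t: "t \<in> {a..b}" and ij: "i < m" "j \<le> n" for t i j
  proof -
    have q: "Q t (Suc i) j - Q t i j = lI t i j *\<^sub>R vI i j" by (rule QI[OF t ij])
    have q1: "Q t (Suc i) j $1 - Q t i j $1 = lI t i j * (F (Suc i) j $1 - F i j $1)"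
      using arg_cong[OF q, of "\<lambda>x. x$1"] by (simp add: vI_def)
    have q2: "Q t (Suc i) j $2 - Q t i j $2 = lI t i j * (F (Suc i) j $2 - F i j $2)"
      using arg_cong[OF q, of "\<lambda>x. x$2"] by (simp add: vI_def)
    have z: "Z t (Suc i) j - Z t i j = lI t i j * (F (Suc i) j $3 - F i j $3)"
      using ZI[OF t ij(1)] ij(2) unfolding dzI_def by simp
    show ?thesis unfolding P_def using q1 q2 z by (simp add: vec_eq_iff forall_3)
  qed
  have PJ: "P t i (Suc j) - P t i j = lJ t i j *\<^sub>R (F i (Suc j) - F i j)"
    if t: "t \<in> {a..b}" and ij: "i \<le> m" "j < n" for t i j
  proof -
    have q: "Q t i (Suc j) - Q t i j = lJ t i j *\<^sub>R vJ i j" by (rule QJ[OF t ij])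
    have q1: "Q t i (Suc j) $1 - Q t i j $1 = lJ t i j * (F i (Suc j) $1 - F i j $1)"
      using arg_cong[OF q, of "\<lambda>x. x$1"] by (simp add: vJ_def)
    have q2: "Q t i (Suc j) $2 - Q t i j $2 = lJ t i j * (F i (Suc j) $2 - F i j $2)"
      using arg_cong[OF q, of "\<lambda>x. x$2"] by (simp add: vJ_def)
    have z: "Z t i (Suc j) - Z t i j = lJ t i j * (F i (Suc j) $3 - F i j $3)"
      using ZJ[of t i j] unfolding dzJ_def by simp
    show ?thesis unfolding P_def using q1 q2 z by (simp add: vec_eq_iff forall_3)
  qed
  have Pnet: "is_net3 m n (P t)" if t: "t \<in> {a..b}" for t
    unfolding is_net3_def
  proof (intro allI impI)
    fix i j assume ij: "i < m" "j < n"
    obtain N where N: "N$3 \<noteq> 0" "(F (Suc i) j - F i j) \<bullet> N = 0" "(F (Suc i) (Suc j) - F (Suc i) j) \<bullet> N = 0"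
       "(F (Suc i) (Suc j) - F i (Suc j)) \<bullet> N = 0" "(F i (Suc j) - F i j) \<bullet> N = 0"
      using net_faces[OF net iso ij] by (elim exE conjE)
    have i1: "i < m" "j \<le> n" "Suc i \<le> m" "j < n" "Suc j \<le> n" "i \<le> m" using ij by auto
    note e1 = PI[OF t i1(1,2)]
    note e2 = PJ[OF t i1(3,4)]
    note e3 = PI[OF t i1(1,5)]
    note e4 = PJ[OF t i1(6,4)]
    have q: "convex_quad2 (top_view (P t i j)) (top_view (P t (Suc i) j)) (top_view (P t (Suc i) (Suc j))) (top_view (P t i (Suc j)))"
      using Qnet[OF t] ij unfolding is_net2_def Ptop by blast
    show "convex_quad3 (P t i j) (P t (Suc i) j) (P t (Suc i) (Suc j)) (P t i (Suc j))"
      by (rule quad2_to_quad3[OF q N(1) perp_fwd[OF e1 N(2)] perp_fwd[OF e2 N(3)] perp_bwd[OF e3 N(4)] perp_bwd[OF e4 N(5)]])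
  qed
  have Ppar: "nets_parallel m n F (P t)" if t: "t \<in> {a..b}" for t
    unfolding nets_parallel_def
  proof (intro conjI allI impI)
    fix i j assume ij: "i < m" "j \<le> n"
    show "\<exists>l. P t (Suc i) j - P t i j = l *\<^sub>R (F (Suc i) j - F i j)" using PI[OF t ij] by blast
  next
    fix i j assume ij: "i \<le> m" "j < n"
    show "\<exists>l. P t i (Suc j) - P t i j = l *\<^sub>R (F i (Suc j) - F i j)" using PJ[OF t ij] by blast
  qed
  have Parea: "\<forall>i<m. \<forall>j<n. iso_quad_area (P t i j) (P t (Suc i) j) (P t (Suc i) (Suc j)) (P t i (Suc j))
                        = iso_quad_area (F i j) (F (Suc i) j) (F (Suc i) (Suc j)) (F i (Suc j))"
    if t: "t \<in> {a..b}" for t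
    using Qarea[OF t] unfolding iso_quad_area_def Ptop top_view_net_def .
  have P0: "\<forall>i\<le>m. \<forall>j\<le>n. P t0 i j = F i j"
  proof -
    have l1: "lI t0 i j = 1" if ij: "i < m" "j \<le> n" for i j
    proof -
      have "Q t0 (Suc i) j - Q t0 i j = vI i j" using Q0 ij unfolding vI_def top_view_net_def
        by (simp add: top_view_diff)
      then show ?thesis unfolding lI_def using vInz[OF ij] by simp
    qed
    have l2: "lJ t0 i j = 1" if ij: "i \<le> m" "j < n" for i j
    proof -
      have "Q t0 i (Suc j) - Q t0 i j = vJ i j" using Q0 ij unfolding vJ_def top_view_net_def
        by (simp add: top_view_diff)
      then show ?thesis unfolding lJ_def using vJnz[OF ij] by simp
    qed
    have g: "\<forall>i\<le>m. \<forall>j\<le>n. P t0 i j - F i j = P t0 0 0 - F 0 0"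
    proof (rule grid_const)
      show "\<forall>i<m. \<forall>j\<le>n. P t0 (Suc i) j - P t0 i j = F (Suc i) j - F i j"
        using PI[OF t0] l1 by simp
      show "\<forall>i\<le>m. \<forall>j<n. P t0 i (Suc j) - P t0 i j = F i (Suc j) - F i j"
        using PJ[OF t0] l2 by simp
    qed
    have "P t0 0 0 = F 0 0"
    proof -
      have "Q t0 0 0 = top_view (F 0 0)" using Q0 unfolding top_view_net_def by simp
      then show ?thesis unfolding P_def Z_def by (simp add: vec_eq_iff forall_3)
    qed
    then show ?thesis using g by simp
  qed
  have Pc: "\<forall>i\<le>m. \<forall>j\<le>n. continuous_on {a..b} (\<lambda>t. P t i j)"
  proof (intro allI impI)
    fix i j assume ij: "i \<le> m" "j \<le> n"
    have qc: "continuous_on {a..b} (\<lambda>t. Q t i' j')" if "i' \<le> m" "j' \<le> n" for i' j'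
      using Qc that by blast
    have c1: "continuous_on {a..b} (\<lambda>t. \<Sum>k<i. dzI t k 0)"
    proof (rule continuous_on_sum)
      fix k assume "k \<in> {..<i}"
      then have "Suc k \<le> m" "k \<le> m" using ij by auto
      then show "continuous_on {a..b} (\<lambda>t. dzI t k 0)" unfolding dzI_def lI_def
        by (intro cont_coef qc) auto
    qed
    have c2: "continuous_on {a..b} (\<lambda>t. \<Sum>k<j. dzJ t i k)"
    proof (rule continuous_on_sum)
      fix k assume "k \<in> {..<j}"
      then have "Suc k \<le> n" "k \<le> n" using ij by auto
      then show "continuous_on {a..b} (\<lambda>t. dzJ t i k)" unfolding dzJ_def lJ_def
        by (intro cont_coef qc) (use ij in auto)
    qed
    have "continuous_on {a..b} (\<lambda>t. Z t i j)" unfolding Z_def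
      by (intro continuous_on_add continuous_on_const c1 c2)
    then show "continuous_on {a..b} (\<lambda>t. P t i j)" unfolding P_def
      by (rule continuous_on_lift[OF qc[OF ij]])
  qed
  have Pnc: "\<not> iso_congruent m n (P s) (P t)" if s: "s \<in> {a..b}" and t: "t \<in> {a..b}" and st: "s \<noteq> t" for s t
  proof
    assume "iso_congruent m n (P s) (P t)"
    then obtain \<phi> c1 c2 bb where Hb: "\<forall>i\<le>m. \<forall>j\<le>n. P t i j = iso_matrix \<phi> c1 c2 *v P s i j + bb"
      unfolding iso_congruent_def by blast
    have "eucl_congruent m n (Q s) (Q t)"
      unfolding eucl_congruent_def
    proof (intro exI conjI allI impI)
      show "orthogonal_matrix (rot2 \<phi>)" by (rule rot2_orth)
      fix i j assume "i \<le> m" "j \<le> n"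
      then have "P t i j = iso_matrix \<phi> c1 c2 *v P s i j + bb" using Hb by blast
      then have "top_view (P t i j) = top_view (iso_matrix \<phi> c1 c2 *v P s i j + bb)" by simp
      then show "Q t i j = rot2 \<phi> *v Q s i j + top_view bb" unfolding top_iso Ptop .
    qed
    then show False using Qnc s t st by blast
  qed
  show ?thesis unfolding deformable_iso_def deformable_gen_def
    apply (rule exI[of _ a], rule exI[of _ b], rule exI[of _ t0], rule exI[of _ P])
    apply (intro conjI)
         apply (rule ab)
        apply (rule t0)
       apply (rule P0)
      apply (rule Pc)
     apply (intro ballI conjI)
       apply (erule Pnet)
      apply (erule Ppar)
     apply (erule Parea)
    apply (intro ballI impI)
    apply (rule Pnc; assumption)
    done
qed


theorem lemma11:
  fixes m n :: nat and F :: "nat \<Rightarrow> nat \<Rightarrow> real^3"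
  assumes "1 \<le> m" and "1 \<le> n"
    and "is_net3 m n F"
    and "\<forall>i<m. \<forall>j<n. in_nonisotropic_plane (F i j) (F (Suc i) j) (F (Suc i) (Suc j)) (F i (Suc j))"
  shows "deformable_iso m n F \<longleftrightarrow> deformable_planar m n (top_view_net F)"
proof
  assume "deformable_iso m n F"
  then show "deformable_planar m n (top_view_net F)" by (rule forward[OF assms])
next
  assume "deformable_planar m n (top_view_net F)"
  then show "deformable_iso m n F" by (rule backward[OF assms])
qed

end
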